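(* For every $h\in C_\mathbb{R}(\mathcal{X}^n)$ and $\mu_1,\dots,\mu_n\in\mathrm{Prob}(\mathcal{X})$, $$P_\mathrm{sym}(h:\mu_1,\dots,\mu_n)=\max\{\mu(h)-\mathcal{I}_\mathrm{sym}(\mu):\mu\in\mathrm{Prob}_{\mu_1,\dots,\mu_n}(\mathcal{X}^n)\},$$ with the maximum attained; moreover $|P_\mathrm{sym}(h:\mu_1,\dots,\mu_n)-P_\mathrm{sym}(h':\mu_1,\dots,\mu_n)|\le\|h-h'\|$ for all $h,h'\in C_\mathbb{R}(\mathcal{X}^n)$.
   Context: $\mathcal{X}=\{t_1,\dots,t_d\}$ is a finite set with a fixed order $t_1<\dots<t_d$; $n\in\mathbb{N}$. $\mathrm{Prob}(\mathcal{X}^k)$ is the set of probability measures on $\mathcal{X}^k$, $C_\mathbb{R}(\mathcal{X}^n)$ the real functions on $\mathcal{X}^n$ with norm $\|f\|=\max|f|$; $\mu(h)=\sum_\mathbf{x}h(\mathbf{x})\mu(\mathbf{x})$. $\mathrm{Prob}_{\mu_1,\dots,\mu_n}(\mathcal{X}^n)$ is the set of $\mu\in\mathrm{Prob}(\mathcal{X}^n)$ whose $i$th marginal is $\mu_i$ for each $i$. For $\mathbf{x}\in\mathcal{X}^N$ its type is $\nu_\mathbf{x}(t)=\#\{j:x_j=t\}/N$. $\mathcal{X}_\le^N$ is the set of sequences in $\mathcal{X}^N$ of the form $(t_1,\dots,t_1,\dots,t_d,\dots,t_d)$. $S_N$ acts by $\sigma(\mathbf{x})=(x_{\sigma^{-1}(1)},\dots,x_{\sigma^{-1}(N)})$.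 An approximating sequence for $(\mu_1,\dots,\mu_n)$ is $\Xi(N)=(\xi_1(N),\dots,\xi_n(N))$ with $\xi_i(N)\in\mathcal{X}_\le^N$ and $\nu_{\xi_i(N)}(t)\to\mu_i(t)$ for all $t$. For $h\in C_\mathbb{R}(\mathcal{X}^n)$, $\kappa_N(h(\mathbf{x}_1,\dots,\mathbf{x}_n))=\frac1N\sum_{j=1}^Nh(x_{1j},\dots,x_{nj})$. The mutual pressure is $$P_\mathrm{sym}(h:\mu_1,\dots,\mu_n)=\limsup_{N\to\infty}\frac1N\log\Biggl[\frac1{(N!)^n}\sum_{\sigma_1,\dots,\sigma_n\in S_N}\exp\bigl(N\kappa_N(h(\sigma_1(\xi_1(N)),\dots,\sigma_n(\xi_n(N))))\bigr)\Biggr]$$ (independent of the approximating sequence), and for $\mu$ with marginals $\mu_1,\dots,\mu_n$, $\mathcal{I}_\mathrm{sym}(\mu)=\sup\{\mu(h)-P_\mathrm{sym}(h:\mu_1,\dots,\mu_n):h\in C_\mathbb{R}(\mathcal{X}^n)\}$. *)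

theory Defs
  imports "HOL-Analysis.Analysis" "HOL-Combinatorics.Permutations"
begin

text \<open>The finite ordered alphabet X is a type 'a :: {finite, linorder}. Functions on X^k and probability
  measures on X^k are real-valued functions on lists (only values on lists of
  length k matter).\<close>

definition pts :: "nat \<Rightarrow> 'a list set" where
  "pts k = {xs. length xs = k}"

definition is_prob :: "('a::finite \<Rightarrow> real) \<Rightarrow> bool" where
  "is_prob p \<longleftrightarrow> (\<forall>t. 0 \<le> p t) \<and> (\<Sum>t\<in>UNIV. p t) = 1"

definition is_prob_n :: "nat \<Rightarrow> ('a::finite list \<Rightarrow> real) \<Rightarrow> bool" where
  "is_prob_n n \<mu> \<longleftrightarrow> (\<forall>x\<in>pts n. 0 \<le> \<mu> x) \<and> (\<Sum>x\<in>pts n. \<mu> x) = 1"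

definition integ :: "nat \<Rightarrow> ('a list \<Rightarrow> real) \<Rightarrow> ('a list \<Rightarrow> real) \<Rightarrow> real" where
  "integ n \<mu> h = (\<Sum>x\<in>pts n. h x * \<mu> x)"

text \<open>i-th marginal (i < n, 0-based)\<close>
definition marginal :: "nat \<Rightarrow> ('a list \<Rightarrow> real) \<Rightarrow> nat \<Rightarrow> 'a \<Rightarrow> real" where
  "marginal n \<mu> i t = (\<Sum>x\<in>{x\<in>pts n. x ! i = t}. \<mu> x)"

definition marginals :: "nat \<Rightarrow> ('a list \<Rightarrow> real) \<Rightarrow> ('a \<Rightarrow> real) list" where
  "marginals n \<mu> = map (marginal n \<mu>) [0..<n]"

definition prob_marg :: "('a::finite \<Rightarrow> real) list \<Rightarrow> ('a list \<Rightarrow> real) set" where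
  "prob_marg ms = {\<mu>. is_prob_n (length ms) \<mu> \<and> marginals (length ms) \<mu> = ms}"

definition seq_type :: "'a list \<Rightarrow> 'a \<Rightarrow> real" where
  "seq_type x t = real (count_list x t) / real (length x)"

definition approx_seq :: "('a::linorder \<Rightarrow> real) list \<Rightarrow> (nat \<Rightarrow> 'a list list) \<Rightarrow> bool" where
  "approx_seq ms \<Xi> \<longleftrightarrow>
     (\<forall>N. length (\<Xi> N) = length ms \<and>
          (\<forall>i<length ms. length (\<Xi> N ! i) = N \<and> sorted (\<Xi> N ! i))) \<and>
     (\<forall>i<length ms. \<forall>t. (\<lambda>N. seq_type (\<Xi> N ! i) t) \<longlonglongrightarrow> (ms ! i) t)"

definition act :: "(nat \<Rightarrow> nat) \<Rightarrow> 'a list \<Rightarrow> 'a list" where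
  "act \<sigma> x = permute_list (inv \<sigma>) x"

text \<open>N * kappa_N(h(x_1,...,x_n)) = sum_j h(x_{1j},...,x_{nj})\<close>
definition N_kappa :: "nat \<Rightarrow> ('a list \<Rightarrow> real) \<Rightarrow> 'a list list \<Rightarrow> real" where
  "N_kappa N h xs = (\<Sum>j<N. h (map (\<lambda>x. x ! j) xs))"

definition perm_tuples :: "nat \<Rightarrow> nat \<Rightarrow> (nat \<Rightarrow> nat) list set" where
  "perm_tuples n N = {ss. length ss = n \<and> (\<forall>\<sigma>\<in>set ss. \<sigma> permutes {..<N})}"

definition pressure_seq :: "('a list \<Rightarrow> real) \<Rightarrow> nat \<Rightarrow> (nat \<Rightarrow> 'a list list) \<Rightarrow> nat \<Rightarrow> real" where
  "pressure_seq h n \<Xi> N =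
     (1 / real N) * ln ((1 / (fact N) ^ n) *
        (\<Sum>ss\<in>perm_tuples n N. exp (N_kappa N h (map2 act ss (\<Xi> N)))))"

text \<open>Mutual pressure, computed along some approximating sequence (the paper
  notes it is independent of the choice).\<close>
definition P_sym :: "('a::{finite,linorder} list \<Rightarrow> real) \<Rightarrow> ('a \<Rightarrow> real) list \<Rightarrow> ereal" where
  "P_sym h ms = limsup (\<lambda>N. ereal (pressure_seq h (length ms) (SOME \<Xi>. approx_seq ms \<Xi>) N))"

definition I_sym :: "nat \<Rightarrow> ('a::{finite,linorder} list \<Rightarrow> real) \<Rightarrow> ereal" where
  "I_sym n \<mu> = (SUP h. ereal (integ n \<mu> h) - P_sym h (marginals n \<mu>))"

definition supnorm :: "nat \<Rightarrow> ('a::finite list \<Rightarrow> real) \<Rightarrow> real" where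
  "supnorm n f = Max ((\<lambda>x. \<bar>f x\<bar>) ` pts n)"

end

theory Submission
  imports Defs
begin


lemma hb_extend:
  fixes p :: "('b \<Rightarrow> real) \<Rightarrow> real"
  assumes fin: "finite S"
    and sub: "\<And>g g'. p (\<lambda>x. g x + g' x) \<le> p g + p g'"
    and hom: "\<And>s g. s > 0 \<Longrightarrow> p (\<lambda>x. s * g x) = s * p g"
    and p0: "p (\<lambda>x. 0) = 0"
  shows "\<exists>c. \<forall>g. (\<forall>x. x \<notin> S \<longrightarrow> g x = 0) \<longrightarrow> (\<Sum>x\<in>S. c x * g x) \<le> p g"
  using fin
proof (induction S rule: finite_induct)
  case empty
  show ?case
  proof (intro exI allI impI)
    fix g :: "'b \<Rightarrow> real" assume "\<forall>x. x \<notin> {} \<longrightarrow> g x = 0"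
    hence "g = (\<lambda>x. 0)" by auto
    thus "(\<Sum>x\<in>{}. (\<lambda>_. 0) x * g x) \<le> p g" using p0 by simp
  qed
next
  case (insert a S)
  then obtain c where c: "\<And>g. (\<forall>x. x \<notin> S \<longrightarrow> g x = 0) \<Longrightarrow> (\<Sum>x\<in>S. c x * g x) \<le> p g" by blast
  define L where "L g = (\<Sum>x\<in>S. c x * g x)" for g :: "'b \<Rightarrow> real"
  define e :: "'b \<Rightarrow> real" where "e = (\<lambda>x. if x = a then 1 else 0)"
  define W where "W = {w :: 'b \<Rightarrow> real. \<forall>x. x \<notin> S \<longrightarrow> w x = 0}"
  have Lsc: "L (\<lambda>x. s * w x) = s * L w" for s w by (simp add: L_def sum_distrib_left mult_ac)
  have key: "L w - p (\<lambda>x. w x - e x) \<le> p (\<lambda>x. w' x + e x) - L w'" if "w \<in> W" "w' \<in> W" for w w'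
  proof -
    have "L w + L w' = L (\<lambda>x. w x + w' x)" by (simp add: L_def sum.distrib distrib_left)
    also have "\<dots> \<le> p (\<lambda>x. w x + w' x)" using c that unfolding L_def W_def by auto
    also have "\<dots> \<le> p (\<lambda>x. w x - e x) + p (\<lambda>x. w' x + e x)"
      using sub[of "\<lambda>x. w x - e x" "\<lambda>x. w' x + e x"] by simp
    finally show ?thesis by simp
  qed
  define A where "A = (\<lambda>w. L w - p (\<lambda>x. w x - e x)) ` W"
  define d where "d = Sup A"
  have zW: "(\<lambda>x. 0) \<in> W" by (simp add: W_def)
  have Ane: "A \<noteq> {}" using zW by (auto simp: A_def)
  have Abdd: "bdd_above A" unfolding A_def using key[OF _ zW] by (auto intro!: bdd_aboveI)
  have dA: "L w - p (\<lambda>x. w x - e x) \<le> d" if "w \<in> W" for w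
    unfolding d_def using that Abdd by (auto intro!: cSup_upper simp: A_def)
  have dB: "d \<le> p (\<lambda>x. w x + e x) - L w" if "w \<in> W" for w
    unfolding d_def using that Ane key by (auto intro!: cSup_least simp: A_def)
  have main: "d * t + L w \<le> p (\<lambda>x. w x + t * e x)" if w: "w \<in> W" for w t
  proof (cases t "0::real" rule: linorder_cases)
    case equal
    then show ?thesis using c w by (simp add: L_def W_def)
  next
    case greater
    have ww: "(\<lambda>x. w x / t) \<in> W" using w by (auto simp: W_def)
    have "t * d \<le> t * (p (\<lambda>x. w x / t + e x) - L (\<lambda>x. w x / t))"
      using dB[OF ww] greater by (simp add: mult_left_mono)
    also have "\<dots> = p (\<lambda>x. t * (w x / t + e x)) - L w"
      using greater hom[of t "\<lambda>x. w x / t + e x"] Lsc[of t "\<lambda>x. w x / t"] by (simp add: right_diff_distrib)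
    also have "(\<lambda>x. t * (w x / t + e x)) = (\<lambda>x. w x + t * e x)"
      using greater by (auto simp: field_simps)
    finally show ?thesis by (simp add: mult_ac)
  next
    case less
    define s where "s = - t"
    have s: "s > 0" using less by (simp add: s_def)
    have ww: "(\<lambda>x. w x / s) \<in> W" using w by (auto simp: W_def)
    have "s * (L (\<lambda>x. w x / s) - p (\<lambda>x. w x / s - e x)) \<le> s * d"
      using dA[OF ww] s by (simp add: mult_left_mono)
    also have "s * (L (\<lambda>x. w x / s) - p (\<lambda>x. w x / s - e x)) = L w - p (\<lambda>x. s * (w x / s - e x))"
      using s hom[of s "\<lambda>x. w x / s - e x"] Lsc[of s "\<lambda>x. w x / s"] by (simp add: right_diff_distrib)
    also have "(\<lambda>x. s * (w x / s - e x)) = (\<lambda>x. w x + t * e x)"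
      using s by (auto simp: field_simps s_def)
    finally show ?thesis by (simp add: s_def mult_ac)
  qed
  show ?case
  proof (intro exI allI impI)
    fix g :: "'b \<Rightarrow> real" assume g: "\<forall>x. x \<notin> insert a S \<longrightarrow> g x = 0"
    define w where "w = g(a := 0)"
    have w: "w \<in> W" using g by (auto simp: W_def w_def)
    have geq: "(\<lambda>x. w x + g a * e x) = g" by (auto simp: w_def e_def)
    have "(\<Sum>x\<in>insert a S. (c(a := d)) x * g x) = d * g a + (\<Sum>x\<in>S. c x * g x)"
      using insert.hyps by (simp add: sum.insert) (intro sum.cong, auto)
    also have "(\<Sum>x\<in>S. c x * g x) = L w"
      unfolding L_def w_def using insert.hyps by (intro sum.cong) auto
    finally show "(\<Sum>x\<in>insert a S. (c(a := d)) x * g x) \<le> p g"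
      using main[OF w, of "g a"] geq by simp
  qed
qed



lemma subgradient_exists:
  fixes F :: "('b \<Rightarrow> real) \<Rightarrow> real" and h :: "'b \<Rightarrow> real"
  assumes fin: "finite S"
    and conv: "\<And>g g' a. 0 \<le> a \<Longrightarrow> a \<le> 1 \<Longrightarrow> F (\<lambda>x. a * g x + (1 - a) * g' x) \<le> a * F g + (1 - a) * F g'"
    and lb: "\<And>g. \<exists>C. \<forall>t>0. F h - F (\<lambda>x. h x + t * g x) \<le> t * C"
    and dep: "\<And>g g'. (\<forall>x\<in>S. g x = g' x) \<Longrightarrow> F g = F g'"
  shows "\<exists>c. \<forall>g. F h + (\<Sum>x\<in>S. c x * (g x - h x)) \<le> F g"
proof -
  define q where "q g t = (F (\<lambda>x. h x + t * g x) - F h) / t" for g t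
  define p where "p g = Inf (q g ` {0<..})" for g
  have qmono: "q g s \<le> q g t" if st: "0 < s" "s \<le> t" for g s t
  proof -
    have "F (\<lambda>x. h x + s * g x) = F (\<lambda>x. (s/t) * (h x + t * g x) + (1 - s/t) * h x)"
      using st by (intro arg_cong[where f=F]) (auto simp: field_simps)
    also have "\<dots> \<le> (s/t) * F (\<lambda>x. h x + t * g x) + (1 - s/t) * F h"
      using conv[of "s/t"] st by auto
    finally have "F (\<lambda>x. h x + s * g x) - F h \<le> (s/t) * (F (\<lambda>x. h x + t * g x) - F h)"
      by (simp add: algebra_simps)
    also have "(s/t) * (F (\<lambda>x. h x + t * g x) - F h) = ((F (\<lambda>x. h x + t * g x) - F h) / t) * s"
      by simp
    finally show ?thesis using st unfolding q_def by (simp add: pos_divide_le_eq)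
  qed
  have qlb: "\<exists>C. \<forall>t>0. - C \<le> q g t" for g
  proof -
    obtain C where C: "\<forall>t>0. F h - F (\<lambda>x. h x + t * g x) \<le> t * C" using lb by blast
    have "- C \<le> q g t" if "t > 0" for t
      using C that unfolding q_def by (auto simp: field_simps)
    then show ?thesis by blast
  qed
  have ple: "p g \<le> q g t" if "t > 0" for g t
  proof -
    obtain C where "\<forall>t>0. - C \<le> q g t" using qlb by blast
    then have "bdd_below (q g ` {0<..})" by (auto intro!: bdd_belowI)
    then show ?thesis unfolding p_def using that by (auto intro!: cInf_lower)
  qed
  have pge: "y \<le> p g" if "\<And>t. t > 0 \<Longrightarrow> y \<le> q g t" for g y
    unfolding p_def using that by (auto intro!: cInf_greatest)
  have p0: "p (\<lambda>x. 0) = 0"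
  proof -
    have "q (\<lambda>x. 0) t = 0" for t by (simp add: q_def)
    then show ?thesis using ple[of 1 "\<lambda>x. 0"] pge[of 0 "\<lambda>x. 0"] by auto
  qed
  have hom: "p (\<lambda>x. s * g x) = s * p g" if s: "s > 0" for s g
  proof -
    have qs: "q (\<lambda>x. s * g x) t = s * q g (s * t)" if "t > 0" for t
      using s that unfolding q_def by (simp add: field_simps mult.assoc)
    have "p (\<lambda>x. s * g x) / s \<le> p g"
    proof (rule pge)
      fix u :: real assume u: "u > 0"
      have "p (\<lambda>x. s * g x) \<le> q (\<lambda>x. s * g x) (u / s)" using ple u s by auto
      also have "\<dots> = s * q g u" using qs[of "u/s"] u s by simp
      finally show "p (\<lambda>x. s * g x) / s \<le> q g u" using s by (simp add: field_simps)
    qed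
    moreover have "s * p g \<le> p (\<lambda>x. s * g x)"
    proof (rule pge)
      fix t :: real assume t: "t > 0"
      have "s * p g \<le> s * q g (s * t)" using ple[of "s*t" g] s t by simp
      also have "\<dots> = q (\<lambda>x. s * g x) t" using qs t by simp
      finally show "s * p g \<le> q (\<lambda>x. s * g x) t" .
    qed
    ultimately show ?thesis using s by (simp add: field_simps)
  qed
  have qsub: "q (\<lambda>x. g x + g' x) t \<le> q g (2*t) + q g' (2*t)" if t: "t > 0" for g g' t
  proof -
    have "F (\<lambda>x. h x + t * (g x + g' x)) = F (\<lambda>x. (1/2) * (h x + (2*t) * g x) + (1 - 1/2) * (h x + (2*t) * g' x))"
      by (intro arg_cong[where f=F]) (auto simp: field_simps)
    also have "\<dots> \<le> (1/2) * F (\<lambda>x. h x + (2*t) * g x) + (1 - 1/2) * F (\<lambda>x. h x + (2*t) * g' x)"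
      using conv[of "1/2"] by simp
    finally have "F (\<lambda>x. h x + t * (g x + g' x)) - F h \<le>
       (F (\<lambda>x. h x + (2*t) * g x) - F h) / 2 + (F (\<lambda>x. h x + (2*t) * g' x) - F h) / 2"
      by (simp add: diff_divide_distrib)
    then have "(F (\<lambda>x. h x + t * (g x + g' x)) - F h) / t \<le>
       ((F (\<lambda>x. h x + (2*t) * g x) - F h) / 2 + (F (\<lambda>x. h x + (2*t) * g' x) - F h) / 2) / t"
      using t by (intro divide_right_mono) auto
    also have "\<dots> = q g (2*t) + q g' (2*t)" unfolding q_def using t by (simp add: field_simps)
    finally show ?thesis unfolding q_def .
  qed
  have sub: "p (\<lambda>x. g x + g' x) \<le> p g + p g'" for g g'
  proof -
    have A: "p (\<lambda>x. g x + g' x) \<le> q g t1 + q g' t2" if "t1 > 0" "t2 > 0" for t1 t2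
    proof -
      define t where "t = min t1 t2 / 2"
      have t: "t > 0" "2*t \<le> t1" "2*t \<le> t2" using that by (auto simp: t_def)
      have "p (\<lambda>x. g x + g' x) \<le> q (\<lambda>x. g x + g' x) t" using ple t by auto
      also have "\<dots> \<le> q g (2*t) + q g' (2*t)" using qsub t by auto
      also have "\<dots> \<le> q g t1 + q g' t2" using qmono t by (intro add_mono) auto
      finally show ?thesis .
    qed
    have "p (\<lambda>x. g x + g' x) - p g \<le> q g' t2" if "t2 > 0" for t2
    proof -
      have "p (\<lambda>x. g x + g' x) - q g' t2 \<le> p g"
        by (rule pge) (use A that in force)
      then show ?thesis by simp
    qed
    then have "p (\<lambda>x. g x + g' x) - p g \<le> p g'" by (intro pge) auto
    then show ?thesis by simp
  qed
  obtain c where c: "\<And>g. (\<forall>x. x \<notin> S \<longrightarrow> g x = 0) \<Longrightarrow> (\<Sum>x\<in>S. c x * g x) \<le> p g"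
    using hb_extend[of S p, OF fin sub hom p0] by blast
  show ?thesis
  proof (intro exI allI)
    fix g :: "'b \<Rightarrow> real"
    define g0 where "g0 x = (if x \<in> S then g x - h x else 0)" for x
    have "(\<Sum>x\<in>S. c x * (g x - h x)) = (\<Sum>x\<in>S. c x * g0 x)"
      by (intro sum.cong) (auto simp: g0_def)
    also have "\<dots> \<le> p g0" using c[of g0] by (auto simp: g0_def)
    also have "\<dots> \<le> q g0 1" using ple by auto
    also have "\<dots> = F g - F h"
      using dep[of "\<lambda>x. h x + 1 * g0 x" g] by (simp add: q_def g0_def)
    finally show "F h + (\<Sum>x\<in>S. c x * (g x - h x)) \<le> F g" by simp
  qed
qed



lemma count_list_replicate': "count_list (replicate n x) y = (if x = y then n else 0)"
  by (induction n) auto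

definition cnt :: "('a::finite \<Rightarrow> real) \<Rightarrow> nat \<Rightarrow> 'a \<Rightarrow> nat" where
  "cnt p N t = (if t = undefined then N - (\<Sum>u\<in>UNIV - {undefined}. nat \<lfloor>real N * p u\<rfloor>)
                else nat \<lfloor>real N * p t\<rfloor>)"

definition lst :: "('a::{finite,linorder} \<Rightarrow> real) \<Rightarrow> nat \<Rightarrow> 'a list" where
  "lst p N = sort (concat (map (\<lambda>t. replicate (cnt p N t) t) (sorted_list_of_set UNIV)))"

lemma count_lst: "count_list (lst p N) t = cnt p N t"
proof -
  have "count_list (lst p N) t = count_list (concat (map (\<lambda>t. replicate (cnt p N t) t) (sorted_list_of_set UNIV))) t"
    unfolding lst_def by (metis count_mset mset_sort)
  also have "\<dots> = (\<Sum>u\<in>UNIV. count_list (replicate (cnt p N u) u) t)"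
    by (simp add: count_list_concat o_def sum_list_distinct_conv_sum_set)
  also have "\<dots> = (\<Sum>u\<in>UNIV. if u = t then cnt p N u else 0)"
    by (simp add: count_list_replicate')
  also have "\<dots> = cnt p N t" by simp
  finally show ?thesis .
qed

lemma cnt_bounds:
  fixes p :: "'a::finite \<Rightarrow> real"
  assumes "is_prob p"
  shows "(\<Sum>u\<in>UNIV - {undefined}. nat \<lfloor>real N * p u\<rfloor>) \<le> N"
    and "\<bar>real (cnt p N t) - real N * p t\<bar> \<le> real CARD('a)"
    and "(\<Sum>t\<in>UNIV. cnt p N t) = N"
proof -
  have p0: "\<And>t. 0 \<le> p t" and p1: "(\<Sum>t\<in>UNIV. p t) = 1" using assms by (auto simp: is_prob_def)
  have fl: "real (nat \<lfloor>real N * p u\<rfloor>) \<le> real N * p u" for u using p0[of u] by auto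
  have fl2: "real N * p u - 1 \<le> real (nat \<lfloor>real N * p u\<rfloor>)" for u using p0[of u] by linarith
  define R where "R = UNIV - {undefined :: 'a}"
  have split1: "(\<Sum>t\<in>UNIV. p t) = p undefined + (\<Sum>u\<in>R. p u)"
    unfolding R_def by (subst sum.remove[of UNIV undefined]) auto
  have sR: "sum p R = 1 - p undefined" using split1 p1 by simp
  have "real (\<Sum>u\<in>R. nat \<lfloor>real N * p u\<rfloor>) = (\<Sum>u\<in>R. real (nat \<lfloor>real N * p u\<rfloor>))" by simp
  also have "\<dots> \<le> (\<Sum>u\<in>R. real N * p u)" by (intro sum_mono fl)
  also have "\<dots> = real N * (1 - p undefined)" using sR by (simp add: sum_distrib_left[symmetric])
  finally have up: "real (\<Sum>u\<in>R. nat \<lfloor>real N * p u\<rfloor>) \<le> real N * (1 - p undefined)" .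
  have "(\<Sum>u\<in>R. real N * p u - 1) \<le> (\<Sum>u\<in>R. real (nat \<lfloor>real N * p u\<rfloor>))" by (intro sum_mono fl2)
  then have low: "real N * (1 - p undefined) - real (card R) \<le> real (\<Sum>u\<in>R. nat \<lfloor>real N * p u\<rfloor>)"
    using sR by (simp add: sum_subtractf sum_distrib_left[symmetric])
  have cR: "card R \<le> CARD('a)" unfolding R_def by (simp add: card_mono)
  have pu: "p undefined \<ge> 0" by (rule p0)
  have le: "(\<Sum>u\<in>R. nat \<lfloor>real N * p u\<rfloor>) \<le> N"
  proof -
    have "real N * (1 - p undefined) \<le> real N" using pu by (simp add: mult_left_le)
    with up have "real (\<Sum>u\<in>R. nat \<lfloor>real N * p u\<rfloor>) \<le> real N" by linarith
    then show ?thesis by linarith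
  qed
  then show "(\<Sum>u\<in>UNIV - {undefined}. nat \<lfloor>real N * p u\<rfloor>) \<le> N" by (simp add: R_def)
  show "\<bar>real (cnt p N t) - real N * p t\<bar> \<le> real CARD('a)"
  proof (cases "t = undefined")
    case True
    have "real (cnt p N t) = real N - real (\<Sum>u\<in>R. nat \<lfloor>real N * p u\<rfloor>)"
      using True le by (simp add: cnt_def R_def of_nat_diff)
    then show ?thesis using True up low cR by (simp add: algebra_simps abs_le_iff)
  next
    case False
    then have c: "real (cnt p N t) = real (nat \<lfloor>real N * p t\<rfloor>)" by (simp add: cnt_def)
    have a: "real (cnt p N t) \<le> real N * p t" using fl[of t] c by linarith
    have b: "real N * p t - 1 \<le> real (cnt p N t)" using fl2[of t] c by linarith
    have "1 \<le> real CARD('a)" by simp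
    then show ?thesis using a b unfolding abs_le_iff by linarith
  qed
  have "(\<Sum>t\<in>UNIV. cnt p N t) = cnt p N undefined + (\<Sum>u\<in>R. cnt p N u)"
    unfolding R_def by (subst sum.remove[of UNIV undefined]) auto
  also have "(\<Sum>u\<in>R. cnt p N u) = (\<Sum>u\<in>R. nat \<lfloor>real N * p u\<rfloor>)"
    by (intro sum.cong) (auto simp: R_def cnt_def)
  finally show "(\<Sum>t\<in>UNIV. cnt p N t) = N" using le by (simp add: cnt_def R_def)
qed

lemma length_lst: assumes "is_prob p" shows "length (lst p N) = N"
proof -
  have "length (lst p N) = (\<Sum>t\<in>UNIV. cnt p N t)"
    by (simp add: lst_def length_concat o_def sum_list_distinct_conv_sum_set)
  then show ?thesis using cnt_bounds(3)[OF assms] by simp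
qed

lemma sorted_lst: "sorted (lst p N)" by (simp add: lst_def)

lemma lst_conv:
  fixes p :: "'a::{finite,linorder} \<Rightarrow> real"
  assumes "is_prob p"
  shows "(\<lambda>N. seq_type (lst p N) t) \<longlonglongrightarrow> p t"
proof -
  define d where "d = real CARD('a)"
  have ev: "eventually (\<lambda>N. \<bar>seq_type (lst p N) t - p t\<bar> \<le> d / real N) sequentially"
    using eventually_gt_at_top[of 0]
  proof eventually_elim
    case (elim N)
    have "seq_type (lst p N) t - p t = (real (cnt p N t) - real N * p t) / real N"
      using elim by (simp add: seq_type_def count_lst length_lst[OF assms] field_simps)
    then show ?case using cnt_bounds(2)[OF assms, of N t] elim
      by (simp add: d_def abs_divide divide_right_mono)
  qed
  have "(\<lambda>N. seq_type (lst p N) t - p t) \<longlonglongrightarrow> 0"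
  proof (rule tendsto_sandwich[of "\<lambda>N. - (d / real N)" _ _ "\<lambda>N. d / real N"])
    show "\<forall>\<^sub>F n in sequentially. - (d / real n) \<le> seq_type (lst p n) t - p t"
      using ev by eventually_elim (simp add: abs_le_iff)
    show "\<forall>\<^sub>F n in sequentially. seq_type (lst p n) t - p t \<le> d / real n"
      using ev by eventually_elim (simp add: abs_le_iff)
    show "(\<lambda>n. - (d / real n)) \<longlonglongrightarrow> 0" using tendsto_minus[OF lim_const_over_n[of d]] by simp
    show "(\<lambda>n. d / real n) \<longlonglongrightarrow> 0" by (rule lim_const_over_n)
  qed
  then show ?thesis by (simp add: LIM_zero_iff)
qed

lemma approx_exists:
  fixes ms :: "('a::{finite,linorder} \<Rightarrow> real) list"
  assumes "\<forall>p\<in>set ms. is_prob p"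
  shows "approx_seq ms (\<lambda>N. map (\<lambda>p. lst p N) ms)"
  unfolding approx_seq_def using assms
  by (auto simp: length_lst lst_conv sorted_lst)



lemma exp_conv2: "0 \<le> (a::real) \<Longrightarrow> a \<le> 1 \<Longrightarrow> exp (a * x + (1 - a) * y) \<le> a * exp x + (1 - a) * exp y"
  using convex_onD[OF exp_convex, of "1 - a" x y] by (simp add: algebra_simps)


lemma lse_convex:
  fixes u v :: "'i \<Rightarrow> real"
  assumes fin: "finite I" and ne: "I \<noteq> {}" and a: "0 \<le> a" "a \<le> 1"
  shows "ln (\<Sum>k\<in>I. exp (a * u k + (1 - a) * v k))
         \<le> a * ln (\<Sum>k\<in>I. exp (u k)) + (1 - a) * ln (\<Sum>k\<in>I. exp (v k))"
proof -
  define U where "U = (\<Sum>k\<in>I. exp (u k))"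
  define V where "V = (\<Sum>k\<in>I. exp (v k))"
  have U: "U > 0" unfolding U_def using fin ne by (intro sum_pos) auto
  have V: "V > 0" unfolding V_def using fin ne by (intro sum_pos) auto
  define M where "M = a * ln U + (1 - a) * ln V"
  have tm: "exp (a * u k + (1 - a) * v k) \<le> exp M * (a * (exp (u k) / U) + (1 - a) * (exp (v k) / V))" for k
  proof -
    have "exp (a * u k + (1 - a) * v k) = exp M * exp (a * (u k - ln U) + (1 - a) * (v k - ln V))"
      unfolding M_def by (simp add: exp_add[symmetric] algebra_simps)
    also have "exp (a * (u k - ln U) + (1 - a) * (v k - ln V)) \<le> a * exp (u k - ln U) + (1 - a) * exp (v k - ln V)"
      by (rule exp_conv2[OF a])
    also have "exp (u k - ln U) = exp (u k) / U" using U by (simp add: exp_diff)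
    also have "exp (v k - ln V) = exp (v k) / V" using V by (simp add: exp_diff)
    finally show ?thesis by (simp add: mult_left_mono)
  qed
  have "(\<Sum>k\<in>I. exp (a * u k + (1 - a) * v k)) \<le> (\<Sum>k\<in>I. exp M * (a * (exp (u k) / U) + (1 - a) * (exp (v k) / V)))"
    by (intro sum_mono tm)
  also have "\<dots> = exp M * (a * ((\<Sum>k\<in>I. exp (u k)) / U) + (1 - a) * ((\<Sum>k\<in>I. exp (v k)) / V))"
    by (simp add: sum_distrib_left sum.distrib sum_divide_distrib distrib_left mult.assoc)
  also have "\<dots> = exp M" using U V by (simp add: U_def[symmetric] V_def[symmetric])
  finally have le: "(\<Sum>k\<in>I. exp (a * u k + (1 - a) * v k)) \<le> exp M" .
  have pos: "(\<Sum>k\<in>I. exp (a * u k + (1 - a) * v k)) > 0" using fin ne by (intro sum_pos) auto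
  have "ln (\<Sum>k\<in>I. exp (a * u k + (1 - a) * v k)) \<le> ln (exp M)"
    using le pos by (subst ln_le_cancel_iff) auto
  then show ?thesis by (simp add: M_def U_def V_def)
qed

lemma count_list_sum: "real (count_list xs t) = (\<Sum>j<length xs. if xs ! j = t then 1 else 0)"
  by (induction xs) (simp_all add: sum.lessThan_Suc_shift del: sum.lessThan_Suc)

lemma perm_tuples_finite: "finite (perm_tuples n N)"
proof -
  have "perm_tuples n N = {xs. set xs \<subseteq> {\<sigma>. \<sigma> permutes {..<N}} \<and> length xs = n}"
    by (auto simp: perm_tuples_def)
  then show ?thesis by (simp add: finite_lists_length_eq finite_permutations)
qed

lemma perm_tuples_card: "card (perm_tuples n N) = fact N ^ n"
proof -
  have "perm_tuples n N = {xs. set xs \<subseteq> {\<sigma>. \<sigma> permutes {..<N}} \<and> length xs = n}"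
    by (auto simp: perm_tuples_def)
  then show ?thesis by (simp add: card_lists_length_eq finite_permutations card_permutations)
qed

lemma perm_tuples_ne: "perm_tuples n N \<noteq> {}"
proof -
  have "replicate n id \<in> perm_tuples n N" by (auto simp: perm_tuples_def permutes_id)
  then show ?thesis by blast
qed

lemma length_act[simp]: "length (act \<sigma> xs) = length xs"
  by (simp add: act_def)

lemma count_act:
  assumes "\<sigma> permutes {..<length xs}"
  shows "count_list (act \<sigma> xs) t = count_list xs t"
proof -
  have "inv \<sigma> permutes {..<length xs}" using assms by (rule permutes_inv)
  then have "mset (act \<sigma> xs) = mset xs" by (simp add: act_def mset_permute_list)
  then show ?thesis by (metis count_mset)
qed

lemma finite_pts: "finite (pts n :: 'a::finite list set)"
proof -
  have "finite {xs :: 'a list. set xs \<subseteq> UNIV \<and> length xs = n}" by (rule finite_lists_length_eq) simp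
  then show ?thesis by (simp add: pts_def)
qed

lemma pts_ne: "pts n \<noteq> {}"
proof -
  have "replicate n undefined \<in> pts n" by (simp add: pts_def)
  then show ?thesis by blast
qed

lemma supnorm_ge: "x \<in> pts n \<Longrightarrow> \<bar>f x\<bar> \<le> supnorm n (f :: 'a::finite list \<Rightarrow> real)"
  unfolding supnorm_def by (rule Max_ge) (auto simp: finite_pts)

lemma supnorm_nonneg: "0 \<le> supnorm n (f :: 'a::finite list \<Rightarrow> real)"
proof -
  obtain x where "x \<in> (pts n :: 'a list set)" using pts_ne by blast
  then show ?thesis using supnorm_ge[of x n f] by linarith
qed

context
  fixes ms :: "('a::{finite,linorder} \<Rightarrow> real) list" and \<Xi> :: "nat \<Rightarrow> 'a list list"
  assumes ax: "approx_seq ms \<Xi>"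
begin

abbreviation "nn \<equiv> length ms"

definition Ysq :: "nat \<Rightarrow> (nat \<Rightarrow> nat) list \<Rightarrow> 'a list list" where
  "Ysq N ss = map2 act ss (\<Xi> N)"

definition Zs :: "('a list \<Rightarrow> real) \<Rightarrow> nat \<Rightarrow> real" where
  "Zs h N = (\<Sum>ss\<in>perm_tuples nn N. exp (N_kappa N h (Ysq N ss)))"

lemma Xi_len: "length (\<Xi> N) = nn" "i < nn \<Longrightarrow> length (\<Xi> N ! i) = N"
  using ax by (auto simp: approx_seq_def)

lemma Ysq_len: "ss \<in> perm_tuples nn N \<Longrightarrow> length (Ysq N ss) = nn"
  by (simp add: Ysq_def perm_tuples_def Xi_len)

lemma Ysq_nth: "ss \<in> perm_tuples nn N \<Longrightarrow> i < nn \<Longrightarrow> Ysq N ss ! i = act (ss ! i) (\<Xi> N ! i)"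
  by (simp add: Ysq_def perm_tuples_def Xi_len)

lemma col_pts: "ss \<in> perm_tuples nn N \<Longrightarrow> map (\<lambda>x. x ! j) (Ysq N ss) \<in> pts nn"
  by (simp add: pts_def Ysq_len)

lemma ps_eq: "pressure_seq h nn \<Xi> N = (1 / real N) * ln (Zs h N / fact N ^ nn)"
  by (simp add: pressure_seq_def Zs_def Ysq_def)

lemma Zs_pos: "Zs h N > 0"
  unfolding Zs_def using perm_tuples_finite perm_tuples_ne by (intro sum_pos) auto

lemma ps_le:
  assumes N: "N > 0" and le: "\<And>ss. ss \<in> perm_tuples nn N \<Longrightarrow>
             N_kappa N g (Ysq N ss) \<le> N_kappa N g' (Ysq N ss) + real N * c"
  shows "pressure_seq g nn \<Xi> N \<le> pressure_seq g' nn \<Xi> N + c"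
proof -
  define K :: real where "K = fact N ^ nn"
  have K: "K > 0" by (simp add: K_def)
  have "Zs g N \<le> (\<Sum>ss\<in>perm_tuples nn N. exp (real N * c) * exp (N_kappa N g' (Ysq N ss)))"
    unfolding Zs_def using le by (intro sum_mono) (simp add: exp_add[symmetric] add.commute)
  also have "\<dots> = exp (real N * c) * Zs g' N" by (simp add: Zs_def sum_distrib_left)
  finally have "Zs g N / K \<le> exp (real N * c) * (Zs g' N / K)" using K by (simp add: divide_right_mono)
  then have "ln (Zs g N / K) \<le> ln (exp (real N * c) * (Zs g' N / K))"
    using K Zs_pos by (subst ln_le_cancel_iff) auto
  also have "\<dots> = real N * c + ln (Zs g' N / K)" using ln_mult[of "exp (real N * c)" "Zs g' N / K"] K Zs_pos[of g' N] by simp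
  finally have "(1 / real N) * ln (Zs g N / K) \<le> (1 / real N) * (real N * c + ln (Zs g' N / K))"
    by (simp add: divide_right_mono)
  also have "\<dots> = (1 / real N) * ln (Zs g' N / K) + c" using N by (simp add: field_simps)
  finally show ?thesis by (simp add: ps_eq K_def)
qed

lemma ps_eqI:
  assumes N: "N > 0" and eq: "\<And>ss. ss \<in> perm_tuples nn N \<Longrightarrow>
             N_kappa N g (Ysq N ss) = N_kappa N g' (Ysq N ss) + real N * c"
  shows "pressure_seq g nn \<Xi> N = pressure_seq g' nn \<Xi> N + c"
proof -
  have "pressure_seq g nn \<Xi> N \<le> pressure_seq g' nn \<Xi> N + c" using ps_le[OF N, of g g' c] eq by simp
  moreover have "pressure_seq g' nn \<Xi> N \<le> pressure_seq g nn \<Xi> N + (- c)" using ps_le[OF N, of g' g "-c"] eq by simp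
  ultimately show ?thesis by simp
qed

lemma ps_zero: "pressure_seq (\<lambda>x. 0) nn \<Xi> N = 0"
proof -
  have "Zs (\<lambda>x. 0) N = fact N ^ nn" by (simp add: Zs_def N_kappa_def perm_tuples_card)
  then show ?thesis by (simp add: ps_eq)
qed

lemma ps_lip: "pressure_seq g nn \<Xi> N \<le> pressure_seq g' nn \<Xi> N + supnorm nn (\<lambda>x. g x - g' x)"
proof (cases "N = 0")
  case True
  then show ?thesis using supnorm_nonneg by (simp add: pressure_seq_def)
next
  case False
  show ?thesis
  proof (rule ps_le)
    fix ss assume ss: "ss \<in> perm_tuples nn N"
    have "N_kappa N g (Ysq N ss) - N_kappa N g' (Ysq N ss)
        = (\<Sum>j<N. g (map (\<lambda>x. x ! j) (Ysq N ss)) - g' (map (\<lambda>x. x ! j) (Ysq N ss)))"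
      by (simp add: N_kappa_def sum_subtractf)
    also have "\<dots> \<le> (\<Sum>j<N. supnorm nn (\<lambda>x. g x - g' x))"
      using supnorm_ge[OF col_pts[OF ss], where f="\<lambda>x. g x - g' x"] by (intro sum_mono) (meson abs_le_D1)
    finally show "N_kappa N g (Ysq N ss) \<le> N_kappa N g' (Ysq N ss) + real N * supnorm nn (\<lambda>x. g x - g' x)"
      by simp
  qed (use False in auto)
qed

lemma ps_mono:
  assumes "\<And>x. x \<in> pts nn \<Longrightarrow> g x \<le> g' x"
  shows "pressure_seq g nn \<Xi> N \<le> pressure_seq g' nn \<Xi> N"
proof (cases "N = 0")
  case True
  then show ?thesis by (simp add: pressure_seq_def)
next
  case False
  have "pressure_seq g nn \<Xi> N \<le> pressure_seq g' nn \<Xi> N + 0"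
  proof (rule ps_le)
    fix ss assume ss: "ss \<in> perm_tuples nn N"
    show "N_kappa N g (Ysq N ss) \<le> N_kappa N g' (Ysq N ss) + real N * 0"
      unfolding N_kappa_def using assms col_pts[OF ss] by (simp add: sum_mono)
  qed (use False in auto)
  then show ?thesis by simp
qed

lemma ps_const:
  assumes "N > 0"
  shows "pressure_seq (\<lambda>x. g x + c) nn \<Xi> N = pressure_seq g nn \<Xi> N + c"
  by (rule ps_eqI[OF assms]) (simp add: N_kappa_def sum.distrib)

lemma ps_marg:
  assumes N: "N > 0" and i: "i < nn"
  shows "pressure_seq (\<lambda>x. g x + s * (if x ! i = t then 1 else 0)) nn \<Xi> N
       = pressure_seq g nn \<Xi> N + s * seq_type (\<Xi> N ! i) t"
proof (rule ps_eqI[OF N])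
  fix ss assume ss: "ss \<in> perm_tuples nn N"
  have si: "ss ! i permutes {..<length (\<Xi> N ! i)}"
    using ss i Xi_len(2)[OF i] by (auto simp: perm_tuples_def)
  have "(\<Sum>j<N. (if map (\<lambda>x. x ! j) (Ysq N ss) ! i = t then 1 else 0 :: real))
      = (\<Sum>j<length (Ysq N ss ! i). if Ysq N ss ! i ! j = t then 1 else 0)"
    using ss i by (simp add: Ysq_len Ysq_nth Xi_len)
  also have "\<dots> = real (count_list (Ysq N ss ! i) t)" by (simp add: count_list_sum)
  also have "\<dots> = real (count_list (\<Xi> N ! i) t)" using Ysq_nth[OF ss i] count_act[OF si] by simp
  also have "\<dots> = real N * seq_type (\<Xi> N ! i) t"
    using N i by (simp add: seq_type_def Xi_len)
  finally have "(\<Sum>j<N. (if map (\<lambda>x. x ! j) (Ysq N ss) ! i = t then 1 else 0 :: real)) = real N * seq_type (\<Xi> N ! i) t" .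
  then show "N_kappa N (\<lambda>x. g x + s * (if x ! i = t then 1 else 0)) (Ysq N ss)
      = N_kappa N g (Ysq N ss) + real N * (s * seq_type (\<Xi> N ! i) t)"
    by (simp add: N_kappa_def sum.distrib sum_distrib_left[symmetric] mult_ac)
qed

lemma ps_convex:
  assumes a: "0 \<le> a" "a \<le> 1"
  shows "pressure_seq (\<lambda>x. a * g x + (1 - a) * g' x) nn \<Xi> N
       \<le> a * pressure_seq g nn \<Xi> N + (1 - a) * pressure_seq g' nn \<Xi> N"
proof -
  define K :: real where "K = fact N ^ nn"
  have K: "K > 0" by (simp add: K_def)
  have lin: "N_kappa N (\<lambda>x. a * g x + (1 - a) * g' x) Y = a * N_kappa N g Y + (1 - a) * N_kappa N g' Y" for Y
    by (simp add: N_kappa_def sum.distrib sum_distrib_left)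
  have "ln (Zs (\<lambda>x. a * g x + (1 - a) * g' x) N) \<le> a * ln (Zs g N) + (1 - a) * ln (Zs g' N)"
    unfolding Zs_def lin by (rule lse_convex[OF perm_tuples_finite perm_tuples_ne a])
  moreover have e: "\<And>h. ln (Zs h N / K) = ln (Zs h N) - ln K" using K Zs_pos by (simp add: ln_divide_pos)
  moreover have "a * (x - k) + (1 - a) * (y - k) = a * x + (1 - a) * y - (k::real)" for x y k
    by (simp add: algebra_simps)
  ultimately have "ln (Zs (\<lambda>x. a * g x + (1 - a) * g' x) N / K) \<le> a * ln (Zs g N / K) + (1 - a) * ln (Zs g' N / K)"
    by (simp only: e)
  then have "(1 / real N) * ln (Zs (\<lambda>x. a * g x + (1 - a) * g' x) N / K)
     \<le> (1 / real N) * (a * ln (Zs g N / K) + (1 - a) * ln (Zs g' N / K))"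
    by (rule mult_left_mono) simp
  moreover have "(c::real) * (a * x + (1 - a) * y) = a * (c * x) + (1 - a) * (c * y)" for c x y
    by (simp add: algebra_simps)
  ultimately show ?thesis unfolding ps_eq K_def by simp
qed

end



definition Xi0 :: "('a::{finite,linorder} \<Rightarrow> real) list \<Rightarrow> nat \<Rightarrow> 'a list list" where
  "Xi0 ms = (SOME \<Xi>. approx_seq ms \<Xi>)"

lemma lsup_le:
  assumes "\<And>N. N > 0 \<Longrightarrow> a N \<le> b N + c"
  shows "limsup (\<lambda>N. ereal (a N)) \<le> limsup (\<lambda>N. ereal (b N)) + ereal c"
proof -
  have "limsup (\<lambda>N. ereal (a N)) \<le> limsup (\<lambda>N. ereal (b N) + ereal c)"
    by (rule Limsup_mono, rule eventually_sequentiallyI[of 1]) (use assms in auto)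
  also have "\<dots> = limsup (\<lambda>N. ereal (b N)) + ereal c"
    by (rule Limsup_add_ereal_right) auto
  finally show ?thesis .
qed

context
  fixes ms :: "('a::{finite,linorder} \<Rightarrow> real) list"
  assumes H: "\<forall>p\<in>set ms. is_prob p"
begin

lemma ax0: "approx_seq ms (Xi0 ms)"
  unfolding Xi0_def by (rule someI[where P="approx_seq ms", OF approx_exists[OF H]])

lemma P_def': "P_sym h ms = limsup (\<lambda>N. ereal (pressure_seq h (length ms) (Xi0 ms) N))"
  by (simp add: P_sym_def Xi0_def)

definition Pr :: "('a list \<Rightarrow> real) \<Rightarrow> real" where
  "Pr h = real_of_ereal (P_sym h ms)"

lemma P_fin: "P_sym h ms = ereal (Pr h)"
proof -
  define B where "B = supnorm (length ms) h"
  have up: "pressure_seq h (length ms) (Xi0 ms) N \<le> B" for N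
    using ps_lip[OF ax0, where g=h and g'="\<lambda>x. 0" and N=N] ps_zero[OF ax0, of N] by (simp add: B_def)
  have sn: "supnorm (length ms) (\<lambda>x. 0 - h x) = B" by (simp add: B_def supnorm_def)
  have lo: "- B \<le> pressure_seq h (length ms) (Xi0 ms) N" for N
    using ps_lip[OF ax0, where g="\<lambda>x. 0" and g'=h and N=N] ps_zero[OF ax0, of N] sn by simp
  have "P_sym h ms \<le> ereal B" unfolding P_def'
    by (rule Limsup_bounded) (use up in auto)
  moreover have "ereal (- B) \<le> P_sym h ms" unfolding P_def'
    by (rule le_Limsup) (use lo in auto)
  ultimately have "\<bar>P_sym h ms\<bar> \<noteq> \<infinity>" by auto
  then show ?thesis unfolding Pr_def by (simp add: ereal_real')
qed

lemma Pr_lip: "Pr g \<le> Pr g' + supnorm (length ms) (\<lambda>x. g x - g' x)"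
proof -
  have "ereal (Pr g) \<le> ereal (Pr g') + ereal (supnorm (length ms) (\<lambda>x. g x - g' x))"
    unfolding P_fin[symmetric] P_def' by (rule lsup_le) (rule ps_lip[OF ax0])
  then show ?thesis by simp
qed

lemma Pr_mono: "(\<And>x. x \<in> pts (length ms) \<Longrightarrow> g x \<le> g' x) \<Longrightarrow> Pr g \<le> Pr g'"
proof -
  assume a: "\<And>x. x \<in> pts (length ms) \<Longrightarrow> g x \<le> g' x"
  have "ereal (Pr g) \<le> ereal (Pr g') + ereal 0"
    unfolding P_fin[symmetric] P_def' by (rule lsup_le) (use ps_mono[OF ax0 a] in simp)
  then show ?thesis by simp
qed

lemma Pr_dep: "(\<forall>x\<in>pts (length ms). g x = g' x) \<Longrightarrow> Pr g = Pr g'"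
  using Pr_mono[of g g'] Pr_mono[of g' g] by fastforce

lemma Pr_const: "Pr (\<lambda>x. g x + c) = Pr g + c"
proof -
  have "P_sym (\<lambda>x. g x + c) ms = limsup (\<lambda>N. ereal (pressure_seq g (length ms) (Xi0 ms) N) + ereal c)"
    unfolding P_def'
    by (rule Limsup_eq, rule eventually_sequentiallyI[of 1]) (use ps_const[OF ax0] in auto)
  also have "\<dots> = P_sym g ms + ereal c" unfolding P_def'
    by (rule Limsup_add_ereal_right) auto
  finally show ?thesis by (simp add: P_fin)
qed

lemma Pr_marg:
  assumes i: "i < length ms"
  shows "Pr (\<lambda>x. g x + s * (if x ! i = t then 1 else 0)) = Pr g + s * (ms ! i) t"
proof -
  have conv: "(\<lambda>N. ereal (s * seq_type (Xi0 ms N ! i) t)) \<longlonglongrightarrow> ereal (s * (ms ! i) t)"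
    using ax0 i unfolding approx_seq_def by (intro tendsto_ereal tendsto_mult_left) auto
  have "P_sym (\<lambda>x. g x + s * (if x ! i = t then 1 else 0)) ms
      = limsup (\<lambda>N. ereal (s * seq_type (Xi0 ms N ! i) t) + ereal (pressure_seq g (length ms) (Xi0 ms) N))"
    unfolding P_def'
    by (rule Limsup_eq, rule eventually_sequentiallyI[of 1]) (use ps_marg[OF ax0 _ i] in auto)
  also have "\<dots> = ereal (s * (ms ! i) t) + P_sym g ms" unfolding P_def'
    by (rule ereal_limsup_lim_add[OF conv]) auto
  finally show ?thesis by (simp add: P_fin)
qed

lemma Pr_conv:
  assumes a: "0 \<le> a" "a \<le> 1"
  shows "Pr (\<lambda>x. a * g x + (1 - a) * g' x) \<le> a * Pr g + (1 - a) * Pr g'"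
proof -
  let ?p = "\<lambda>h N. pressure_seq h (length ms) (Xi0 ms) N"
  have "P_sym (\<lambda>x. a * g x + (1 - a) * g' x) ms
      \<le> limsup (\<lambda>N. ereal a * ereal (?p g N) + ereal (1 - a) * ereal (?p g' N))"
    unfolding P_def' by (rule Limsup_mono) (use ps_convex[OF ax0 a] in auto)
  also have "\<dots> \<le> limsup (\<lambda>N. ereal a * ereal (?p g N)) + limsup (\<lambda>N. ereal (1 - a) * ereal (?p g' N))"
    by (rule ereal_limsup_add_mono)
  also have "\<dots> = ereal a * P_sym g ms + ereal (1 - a) * P_sym g' ms"
    unfolding P_def' using a limsup_ereal_mult_left[of a] limsup_ereal_mult_left[of "1 - a"]
    by (simp del: times_ereal.simps add: times_ereal.simps[symmetric])
  finally show ?thesis by (simp add: P_fin)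
qed

end



lemma supnorm_scale:
  assumes t: "t > 0"
  shows "supnorm n (\<lambda>x. h x - (h x + t * g x)) \<le> t * supnorm n (g :: 'a::finite list \<Rightarrow> real)"
  unfolding supnorm_def[of n "\<lambda>x. h x - (h x + t * g x)"]
proof (rule Max.boundedI)
  show "finite ((\<lambda>x. \<bar>h x - (h x + t * g x)\<bar>) ` pts n)" by (simp add: finite_pts)
  show "(\<lambda>x. \<bar>h x - (h x + t * g x)\<bar>) ` pts n \<noteq> {}" using pts_ne by blast
  fix y assume "y \<in> (\<lambda>x. \<bar>h x - (h x + t * g x)\<bar>) ` pts n"
  then obtain x where x: "x \<in> pts n" "y = \<bar>t * g x\<bar>" by auto
  then show "y \<le> t * supnorm n g" using supnorm_ge[OF x(1), of g] t by (simp add: abs_mult)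
qed

theorem mainTheorem15:
  fixes ms :: "('a::{finite,linorder} \<Rightarrow> real) list"
  assumes "\<forall>p\<in>set ms. is_prob p"
  shows "(\<forall>h :: 'a list \<Rightarrow> real.
            (\<exists>\<mu>\<in>prob_marg ms.
               P_sym h ms = ereal (integ (length ms) \<mu> h) - I_sym (length ms) \<mu>) \<and>
            (\<forall>\<mu>\<in>prob_marg ms.
               ereal (integ (length ms) \<mu> h) - I_sym (length ms) \<mu> \<le> P_sym h ms))
       \<and> (\<forall>h h' :: 'a list \<Rightarrow> real.
            \<bar>P_sym h ms - P_sym h' ms\<bar> \<le> ereal (supnorm (length ms) (\<lambda>x. h x - h' x)))"
proof (intro conjI allI ballI)
  note H = assms
  let ?n = "length ms"
  let ?P = "Pr ms"
  have Pfin: "\<And>h. P_sym h ms = ereal (?P h)" using P_fin[OF H] .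
  fix h :: "'a list \<Rightarrow> real"
  {
    fix h' :: "'a list \<Rightarrow> real"
    have "?P h \<le> ?P h' + supnorm ?n (\<lambda>x. h x - h' x)" by (rule Pr_lip[OF H])
    moreover have "?P h' \<le> ?P h + supnorm ?n (\<lambda>x. h' x - h x)" by (rule Pr_lip[OF H])
    moreover have "supnorm ?n (\<lambda>x. h' x - h x) = supnorm ?n (\<lambda>x. h x - h' x)"
      unfolding supnorm_def by (simp add: abs_minus_commute)
    ultimately show "\<bar>P_sym h ms - P_sym h' ms\<bar> \<le> ereal (supnorm ?n (\<lambda>x. h x - h' x))"
      unfolding Pfin by (simp add: abs_le_iff)
  }
  {
    fix \<mu> assume mu: "\<mu> \<in> prob_marg ms"
    then have mm: "marginals ?n \<mu> = ms" by (simp add: prob_marg_def)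
    have "ereal (integ ?n \<mu> h) - P_sym h ms \<le> I_sym ?n \<mu>"
      unfolding I_sym_def mm by (rule SUP_upper) simp
    then have "ereal (integ ?n \<mu> h) - I_sym ?n \<mu> \<le> ereal (integ ?n \<mu> h) - (ereal (integ ?n \<mu> h) - P_sym h ms)"
      by (intro ereal_minus_mono) auto
    also have "\<dots> = P_sym h ms" unfolding Pfin by simp
    finally show "ereal (integ ?n \<mu> h) - I_sym ?n \<mu> \<le> P_sym h ms" .
  }
  obtain c where c: "\<And>g. ?P h + (\<Sum>x\<in>pts ?n. c x * (g x - h x)) \<le> ?P g"
  proof -
    have "\<exists>c. \<forall>g. ?P h + (\<Sum>x\<in>pts ?n. c x * (g x - h x)) \<le> ?P g"
    proof (rule subgradient_exists)
      show "finite (pts ?n :: 'a list set)" by (rule finite_pts)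
      show "\<And>g g' a. 0 \<le> a \<Longrightarrow> a \<le> 1 \<Longrightarrow> ?P (\<lambda>x. a * g x + (1 - a) * g' x) \<le> a * ?P g + (1 - a) * ?P g'"
        by (rule Pr_conv[OF H])
      show "\<exists>C. \<forall>t>0. ?P h - ?P (\<lambda>x. h x + t * g x) \<le> t * C" for g
      proof (intro exI allI impI)
        fix t :: real assume t: "t > 0"
        have "?P h \<le> ?P (\<lambda>x. h x + t * g x) + supnorm ?n (\<lambda>x. h x - (h x + t * g x))"
          by (rule Pr_lip[OF H])
        then show "?P h - ?P (\<lambda>x. h x + t * g x) \<le> t * supnorm ?n g"
          using supnorm_scale[OF t, of ?n h g] by linarith
      qed
      show "\<And>g g'. \<forall>x\<in>pts ?n. g x = g' x \<Longrightarrow> ?P g = ?P g'" by (rule Pr_dep[OF H])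
    qed
    then show ?thesis using that by blast
  qed
  have sumc: "(\<Sum>x\<in>pts ?n. c x * (g x - h x)) = integ ?n c g - integ ?n c h" for g
    by (simp add: integ_def sum_subtractf algebra_simps)
  have nonneg: "0 \<le> c x" if x: "x \<in> pts ?n" for x
  proof -
    define g where "g y = h y - (if y = x then 1 else 0)" for y
    have "(\<Sum>y\<in>pts ?n. c y * (g y - h y)) = (\<Sum>y\<in>pts ?n. if y = x then - c x else 0)"
      by (intro sum.cong) (auto simp: g_def)
    also have "\<dots> = - c x" using x by (simp add: finite_pts sum.delta)
    finally have "?P h - c x \<le> ?P g" using c[of g] by simp
    moreover have "?P g \<le> ?P h" by (rule Pr_mono[OF H]) (simp add: g_def)
    ultimately show ?thesis by simp
  qed
  have sum1: "(\<Sum>x\<in>pts ?n. c x) = 1"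
  proof -
    have "?P h + (\<Sum>x\<in>pts ?n. c x * ((h x + s) - h x)) \<le> ?P h + s" for s
      using c[of "\<lambda>x. h x + s"] Pr_const[OF H, of h s] by simp
    then have "s * (\<Sum>x\<in>pts ?n. c x) \<le> s" for s by (simp add: sum_distrib_left mult.commute)
    from this[of 1] this[of "-1"] show ?thesis by simp
  qed
  have marg: "marginal ?n c i t = (ms ! i) t" if i: "i < ?n" for i t
  proof -
    have m1: "marginal ?n c i t = (\<Sum>x\<in>pts ?n. c x * (if x ! i = t then 1 else 0))"
      unfolding marginal_def by (simp add: sum.inter_filter[symmetric] finite_pts if_distrib cong: if_cong)
    have "?P h + (\<Sum>x\<in>pts ?n. c x * ((h x + s * (if x ! i = t then 1 else 0)) - h x)) \<le> ?P h + s * (ms ! i) t" for s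
      using c[of "\<lambda>x. h x + s * (if x ! i = t then 1 else 0)"] Pr_marg[OF H i, of h s t] by simp
    then have m2: "s * (\<Sum>x\<in>pts ?n. c x * (if x ! i = t then 1 else 0)) \<le> s * (ms ! i) t" for s
      by (simp add: sum_distrib_left mult_ac)
    show ?thesis using m1 m2[of 1] m2[of "-1"] by simp
  qed
  have cm: "c \<in> prob_marg ms"
    unfolding prob_marg_def is_prob_n_def
    using nonneg sum1 marg by (auto intro!: nth_equalityI simp: marginals_def)
  have Ieq: "I_sym ?n c = ereal (integ ?n c h - ?P h)"
  proof -
    have mm: "marginals ?n c = ms" using cm by (simp add: prob_marg_def)
    show ?thesis unfolding I_sym_def mm
    proof (rule antisym)
      show "(SUP g. ereal (integ ?n c g) - P_sym g ms) \<le> ereal (integ ?n c h - ?P h)"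
      proof (rule SUP_least)
        fix g
        have "integ ?n c g - ?P g \<le> integ ?n c h - ?P h" using c[of g] sumc[of g] by simp
        then show "ereal (integ ?n c g) - P_sym g ms \<le> ereal (integ ?n c h - ?P h)" by (simp add: Pfin)
      qed
      show "ereal (integ ?n c h - ?P h) \<le> (SUP g. ereal (integ ?n c g) - P_sym g ms)"
        using SUP_upper[of h UNIV "\<lambda>g. ereal (integ ?n c g) - P_sym g ms"] by (simp add: Pfin)
    qed
  qed
  show "\<exists>\<mu>\<in>prob_marg ms. P_sym h ms = ereal (integ ?n \<mu> h) - I_sym ?n \<mu>"
    using cm Ieq by (intro bexI[of _ c]) (simp_all add: Pfin)
qed

end
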